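(* Let $\mathcal{G}=(\mathcal{V},\mathcal{E})$ be a directed graph with $\mathcal{V}=[n]$, and consider the discrete-time networked SIR dynamics $$s_i[k+1]=s_i[k]-h s_i[k]\beta\sum_{j\in\bar{\mathcal{N}}_i}a_{ij}x_j[k],\quad x_i[k+1]=(1-h\delta)x_i[k]+h s_i[k]\beta\sum_{j\in\bar{\mathcal{N}}_i}a_{ij}x_j[k],\quad r_i[k+1]=r_i[k]+h\delta x_i[k]$$ for all $i\in\mathcal{V}$, $k\in\mathbb{Z}_{\ge0}$. Suppose that (i) for all $i\in\mathcal{V}$, $s_i[0]\in(0,1]$, $x_i[0]\in[0,1)$, $r_i[0]=0$ and $s_i[0]+x_i[0]=1$; and (ii) $h,\beta,\delta>0$ with $h\delta<1$, $a_{ij}>0$ for all $i\neq j$ with $(j,i)\in\mathcal{E}$, and $h\beta\sum_{j\in\bar{\mathcal{N}}_i}a_{ij}<1$ for all $i\in\mathcal{V}$. Then for every $i\in\mathcal{V}$ (with $k\in\mathbb{Z}_{\ge0}$): (a) $s_i[k]>0$ for all $k\ge0$; (b) if $d_i\neq+\infty$, then $x_i[k]=0$ for all $k<d_i$ and $x_i[k]\in(0,1)$ for all $k\ge d_i$; (c) if $d_i\neq+\infty$, then $r_i[k]=0$ for all $k\le d_i$ and $r_i[k]\in(0,1)$ for all $k>d_i$; (d) if $i\in\mathcal{S}_H$ and $d_i=+\infty$, then $x_i[k]=0$ and $r_i[k]=0$ for all $k\ge0$.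
   Context: A directed edge from node $j$ to node $i$ is written $(j,i)$; $\mathcal{E}$ may contain self-loops. $\mathcal{N}_i=\{j:(j,i)\in\mathcal{E}\}$ and $\bar{\mathcal{N}}_i=\mathcal{N}_i\cup\{i\}$. The weights satisfy $a_{ij}\ge0$, with $a_{ij}$ the weight associated with edge $(j,i)$. $s_i[k],x_i[k],r_i[k]$ are the susceptible, infected and recovered proportions at node $i$ and time $k$. A directed path of length $t$ from $i_0$ to $i_t$ is a sequence of edges $(i_0,i_1),\dots,(i_{t-1},i_t)$; for distinct $i,j$ with a path from $i$ to $j$, $d_{ij}$ is the shortest length of such a path. Define $\mathcal{S}_I=\{i\in\mathcal{V}:x_i[0]>0\}$ and $\mathcal{S}_H=\{i\in\mathcal{V}:x_i[0]=0\}$. For $i\in\mathcal{S}_I$, $d_i=0$; for $i\in\mathcal{S}_H$, $d_i=\min_{j\in\mathcal{S}_I}d_{ji}$ (taken over $j$ having a path to $i$), and $d_i=+\infty$ if no $j\in\mathcal{S}_I$ has a path to $i$. *)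

theory Defs
  imports Complex_Main "HOL-Library.Extended_Nat"
begin

definition walk :: "(nat \<times> nat) set \<Rightarrow> nat \<Rightarrow> nat \<Rightarrow> nat \<Rightarrow> bool" where
  "walk E u v t \<longleftrightarrow> (\<exists>p::nat \<Rightarrow> nat. p 0 = u \<and> p t = v \<and> (\<forall>m<t. (p m, p (Suc m)) \<in> E))"

definition nbhd_bar :: "(nat \<times> nat) set \<Rightarrow> nat \<Rightarrow> nat set" where
  "nbhd_bar E i = {j. (j, i) \<in> E} \<union> {i}"

definition inf_dist :: "nat set \<Rightarrow> (nat \<times> nat) set \<Rightarrow> (nat \<Rightarrow> real) \<Rightarrow> nat \<Rightarrow> enat" where
  "inf_dist V E x0 i =
    (if x0 i > 0 then 0
     else if (\<exists>j\<in>V. x0 j > 0 \<and> j \<noteq> i \<and> (\<exists>t>0. walk E j i t))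
       then enat (LEAST t. t > 0 \<and> (\<exists>j\<in>V. x0 j > 0 \<and> j \<noteq> i \<and> walk E j i t))
       else \<infinity>)"

end

theory Submission
  imports Defs
begin

theorem lemma1:
  fixes n :: nat and E :: "(nat \<times> nat) set" and a :: "nat \<Rightarrow> nat \<Rightarrow> real"
    and s x r :: "nat \<Rightarrow> nat \<Rightarrow> real" and h \<beta> \<delta> :: real
  assumes E_sub: "E \<subseteq> {1..n} \<times> {1..n}"
    and a_nonneg: "\<And>i j. a i j \<ge> 0"
    and s_step: "\<And>i k. i \<in> {1..n} \<Longrightarrow>
       s (Suc k) i = s k i - h * s k i * \<beta> * (\<Sum>j\<in>nbhd_bar E i. a i j * x k j)"
    and x_step: "\<And>i k. i \<in> {1..n} \<Longrightarrow>
       x (Suc k) i = (1 - h * \<delta>) * x k i + h * s k i * \<beta> * (\<Sum>j\<in>nbhd_bar E i. a i j * x k j)"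
    and r_step: "\<And>i k. i \<in> {1..n} \<Longrightarrow> r (Suc k) i = r k i + h * \<delta> * x k i"
    and init: "\<And>i. i \<in> {1..n} \<Longrightarrow>
       0 < s 0 i \<and> s 0 i \<le> 1 \<and> 0 \<le> x 0 i \<and> x 0 i < 1 \<and> r 0 i = 0 \<and> s 0 i + x 0 i = 1"
    and h_pos: "h > 0" and beta_pos: "\<beta> > 0" and delta_pos: "\<delta> > 0"
    and hdelta: "h * \<delta> < 1"
    and a_pos: "\<And>i j. i \<noteq> j \<Longrightarrow> (j, i) \<in> E \<Longrightarrow> a i j > 0"
    and hbeta: "\<And>i. i \<in> {1..n} \<Longrightarrow> h * \<beta> * (\<Sum>j\<in>nbhd_bar E i. a i j) < 1"
    and i_in: "i \<in> {1..n}"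
  shows "(\<forall>k. s k i > 0)
    \<and> (inf_dist {1..n} E (x 0) i \<noteq> \<infinity> \<longrightarrow>
         (\<forall>k. (enat k < inf_dist {1..n} E (x 0) i \<longrightarrow> x k i = 0) \<and>
              (enat k \<ge> inf_dist {1..n} E (x 0) i \<longrightarrow> 0 < x k i \<and> x k i < 1)))
    \<and> (inf_dist {1..n} E (x 0) i \<noteq> \<infinity> \<longrightarrow>
         (\<forall>k. (enat k \<le> inf_dist {1..n} E (x 0) i \<longrightarrow> r k i = 0) \<and>
              (enat k > inf_dist {1..n} E (x 0) i \<longrightarrow> 0 < r k i \<and> r k i < 1)))
    \<and> (x 0 i = 0 \<and> inf_dist {1..n} E (x 0) i = \<infinity> \<longrightarrow> (\<forall>k. x k i = 0 \<and> r k i = 0))"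
proof -
  define V where "V = {1..n::nat}"
  have finN: "finite (nbhd_bar E i')" if "i' \<in> V" for i'
  proof -
    have "nbhd_bar E i' \<subseteq> {1..n} \<union> {i'}" using E_sub unfolding nbhd_bar_def by auto
    thus ?thesis by (rule finite_subset) auto
  qed
  have nbV: "nbhd_bar E i' \<subseteq> V" if "i' \<in> V" for i'
    using E_sub that unfolding nbhd_bar_def V_def by auto
  have inv: "\<forall>i'\<in>V. s k i' > 0 \<and> x k i' \<ge> 0 \<and> r k i' \<ge> 0 \<and> s k i' + x k i' + r k i' = 1" for k
  proof (induction k)
    case 0
    then show ?case using init unfolding V_def by auto
  next
    case (Suc k)
    show ?case
    proof
      fix i' assume iV: "i' \<in> V"
      hence iV': "i' \<in> {1..n}" unfolding V_def .
      define S where "S = (\<Sum>j\<in>nbhd_bar E i'. a i' j * x k j)"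
      have S0: "S \<ge> 0" unfolding S_def
        using Suc.IH nbV[OF iV] a_nonneg by (intro sum_nonneg) (auto intro: mult_nonneg_nonneg)
      have "S \<le> (\<Sum>j\<in>nbhd_bar E i'. a i' j)" unfolding S_def
      proof (rule sum_mono)
        fix j assume "j \<in> nbhd_bar E i'"
        hence jV: "j \<in> V" using nbV[OF iV] by auto
        have "x k j \<le> 1" using Suc.IH jV by force
        thus "a i' j * x k j \<le> a i' j" using a_nonneg[of i' j]
          by (simp add: mult_left_le)
      qed
      hence "h * \<beta> * S \<le> h * \<beta> * (\<Sum>j\<in>nbhd_bar E i'. a i' j)"
        using h_pos beta_pos by (intro mult_left_mono) auto
      hence lt: "h * \<beta> * S < 1" using hbeta[OF iV'] by linarith
      have sk: "s k i' > 0" "x k i' \<ge> 0" "r k i' \<ge> 0" "s k i' + x k i' + r k i' = 1"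
        using Suc.IH iV by auto
      have "s (Suc k) i' = s k i' * (1 - h * \<beta> * S)"
        using s_step[OF iV'] unfolding S_def by (simp add: algebra_simps)
      moreover have "s k i' * (1 - h * \<beta> * S) > 0" using sk lt by simp
      moreover have "x (Suc k) i' \<ge> 0"
      proof -
        have "(1 - h * \<delta>) * x k i' \<ge> 0" using hdelta sk by simp
        moreover have "h * s k i' * \<beta> * S \<ge> 0" using h_pos sk beta_pos S0 by simp
        ultimately show ?thesis using x_step[OF iV', of k] unfolding S_def by linarith
      qed
      moreover have "r (Suc k) i' \<ge> 0" using r_step[OF iV'] sk h_pos delta_pos by simp
      moreover have "s (Suc k) i' + x (Suc k) i' + r (Suc k) i' = 1"
        using s_step[OF iV'] x_step[OF iV'] r_step[OF iV'] sk(4) by (simp add: algebra_simps)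
      ultimately show "0 < s (Suc k) i' \<and> 0 \<le> x (Suc k) i' \<and> 0 \<le> r (Suc k) i' \<and>
          s (Suc k) i' + x (Suc k) i' + r (Suc k) i' = 1" by simp
    qed
  qed
  have sposV: "s k i' > 0" and xnnV: "x k i' \<ge> 0" if "i' \<in> V" for k i'
    using inv[of k] that by auto
  have xlt1: "x k i' < 1" if "i' \<in> V" for k i'
    using inv[of k] that by force
  have sum0: "(\<Sum>j\<in>nbhd_bar E i'. a i' j * x k j) \<ge> 0" if "i' \<in> V" for k i'
    using inv[of k] nbV[OF that] a_nonneg by (intro sum_nonneg) (auto intro: mult_nonneg_nonneg)
  have xlow: "x (Suc k) i' \<ge> (1 - h * \<delta>) * x k i'" if "i' \<in> V" for k i'
  proof -
    have "h * s k i' * \<beta> * (\<Sum>j\<in>nbhd_bar E i'. a i' j * x k j) \<ge> 0"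
      using sum0[OF that, of k] sposV[OF that, of k] h_pos beta_pos by simp
    thus ?thesis using x_step[of i' k] that unfolding V_def by simp
  qed
  have xlow2: "x (Suc k) i' \<ge> h * s k i' * \<beta> * (a i' j * x k j)"
    if "i' \<in> V" "j \<in> nbhd_bar E i'" for k i' j
  proof -
    have "a i' j * x k j \<le> (\<Sum>j\<in>nbhd_bar E i'. a i' j * x k j)"
      apply (rule member_le_sum[OF that(2)])
      using inv[of k] nbV[OF that(1)] finN[OF that(1)] a_nonneg by (auto intro: mult_nonneg_nonneg)
    hence "h * s k i' * \<beta> * (a i' j * x k j) \<le> h * s k i' * \<beta> * (\<Sum>j\<in>nbhd_bar E i'. a i' j * x k j)"
      using sposV[OF that(1), of k] h_pos beta_pos by (intro mult_left_mono) auto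
    moreover have "(1 - h * \<delta>) * x k i' \<ge> 0" using hdelta xnnV[OF that(1), of k] by simp
    ultimately show ?thesis using x_step[of i' k] that unfolding V_def by simp
  qed
  have persist1: "x (Suc k) i' > 0" if "i' \<in> V" "x k i' > 0" for k i'
  proof -
    have "(1 - h * \<delta>) * x k i' > 0" using hdelta that by simp
    thus ?thesis using xlow[OF that(1), of k] by linarith
  qed
  have persist: "x (k + m) i' > 0" if "i' \<in> V" "x k i' > 0" for k m i'
    using that by (induction m) (auto intro: persist1)
  define reach where "reach k i' \<longleftrightarrow> x 0 i' > 0 \<or> (\<exists>j\<in>V. x 0 j > 0 \<and> j \<noteq> i' \<and>
      (\<exists>t. 0 < t \<and> t \<le> k \<and> walk E j i' t))" for k i'
  have lower: "x k i' > 0 \<Longrightarrow> reach k i'" if "i' \<in> V" for k i'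
    using that
  proof (induction k arbitrary: i')
    case 0
    then show ?case unfolding reach_def by auto
  next
    case (Suc k)
    show ?case
    proof (cases "x k i' > 0")
      case True
      then show ?thesis using Suc.IH[OF True Suc.prems(2)] unfolding reach_def
        by (meson le_SucI)
    next
      case False
      hence xk0: "x k i' = 0" using inv[of k] Suc.prems by force
      have "0 < (1 - h * \<delta>) * x k i' + h * s k i' * \<beta> * (\<Sum>j\<in>nbhd_bar E i'. a i' j * x k j)"
        using Suc.prems x_step[of i' k] unfolding V_def by simp
      hence "(\<Sum>j\<in>nbhd_bar E i'. a i' j * x k j) \<noteq> 0" using xk0 by auto
      then obtain j where j: "j \<in> nbhd_bar E i'" "a i' j * x k j \<noteq> 0"
        by (meson sum.neutral)
      have jV: "j \<in> V" using nbV[OF Suc.prems(2)] j by auto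
      have "x k j \<noteq> 0" using j by auto
      hence xj: "x k j > 0" using inv[of k] jV by force
      hence jne: "j \<noteq> i'" using xk0 by auto
      hence jE: "(j, i') \<in> E" using j unfolding nbhd_bar_def by auto
      have rj: "reach k j" using Suc.IH[OF xj jV] .
      show ?thesis
      proof (cases "x 0 i' > 0")
        case True thus ?thesis unfolding reach_def by auto
      next
        case nx: False
        show ?thesis
        proof (cases "x 0 j > 0")
          case True
          have "walk E j i' 1" unfolding walk_def
            by (rule exI[of _ "\<lambda>m. if m = 0 then j else i'"]) (use jE in auto)
          thus ?thesis using True jV jne unfolding reach_def by (intro disjI2) (auto intro!: bexI[of _ j])
        next
          case False
          then obtain j' t p where j': "j' \<in> V" "x 0 j' > 0" "0 < t" "t \<le> k"
            "p 0 = j'" "p t = j" "\<forall>m<t. (p m, p (Suc m)) \<in> E"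
            using rj unfolding reach_def walk_def by blast
          have j'ne: "j' \<noteq> i'" using nx j' by auto
          have "walk E j' i' (Suc t)" unfolding walk_def
            apply (rule exI[of _ "\<lambda>m. if m \<le> t then p m else i'"])
            using j' jE by (auto simp: less_Suc_eq)
          thus ?thesis using j' j'ne unfolding reach_def
            by (intro disjI2) (auto intro!: bexI[of _ j'])
        qed
      qed
    qed
  qed
  have upper: "x k i' > 0" if iVV: "i' \<in> V" and rch: "reach k i'" for k i'
  proof -
    consider "x 0 i' > 0" | j t where "j \<in> V" "x 0 j > 0" "0 < t" "t \<le> k" "walk E j i' t"
      using rch unfolding reach_def by blast
    thus ?thesis
    proof cases
      case 1 thus ?thesis using persist[OF iVV, of 0 k] by simp
    next
      case 2
      then obtain p where p: "p 0 = j" "p t = i'" "\<forall>m<t. (p m, p (Suc m)) \<in> E"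
        unfolding walk_def by blast
      have "m \<le> t \<longrightarrow> x m (p m) > 0" for m
      proof (induction m)
        case 0 thus ?case using 2 p by simp
      next
        case (Suc m)
        show ?case
        proof
          assume mt: "Suc m \<le> t"
          hence e: "(p m, p (Suc m)) \<in> E" using p by auto
          hence pV: "p m \<in> V" "p (Suc m) \<in> V" using E_sub unfolding V_def by auto
          have xm: "x m (p m) > 0" using Suc.IH mt by simp
          show "x (Suc m) (p (Suc m)) > 0"
          proof (cases "p m = p (Suc m)")
            case True thus ?thesis using persist1[OF pV(1) xm] by simp
          next
            case False
            have a: "a (p (Suc m)) (p m) > 0" using a_pos[OF _ e] False by auto
            have jn: "p m \<in> nbhd_bar E (p (Suc m))" using e unfolding nbhd_bar_def by auto
            have "h * s m (p (Suc m)) * \<beta> * (a (p (Suc m)) (p m) * x m (p m)) > 0"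
              using a xm h_pos beta_pos sposV[OF pV(2), of m] by simp
            thus ?thesis using xlow2[OF pV(2) jn, of m] by linarith
          qed
        qed
      qed
      hence "x t i' > 0" using p by auto
      thus ?thesis using persist[OF iVV, of t "k - t"] 2 by simp
    qed
  qed
  define D where "D = inf_dist {1..n} E (x 0) i"
  have iV: "i \<in> V" using i_in V_def by simp
  have Dreach: "(D \<le> enat k) \<longleftrightarrow> reach k i" for k
  proof (cases "x 0 i > 0")
    case True thus ?thesis unfolding D_def inf_dist_def reach_def by (simp add: zero_enat_def)
  next
    case nx: False
    show ?thesis
    proof (cases "\<exists>j\<in>V. x 0 j > 0 \<and> j \<noteq> i \<and> (\<exists>t>0. walk E j i t)")
      case True
      define P where "P t \<longleftrightarrow> t > 0 \<and> (\<exists>j\<in>V. x 0 j > 0 \<and> j \<noteq> i \<and> walk E j i t)" for t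
      have Deq: "D = enat (LEAST t. P t)" using True nx unfolding D_def inf_dist_def P_def V_def
        by auto
      have ex: "\<exists>t. P t" using True unfolding P_def by blast
      show ?thesis
      proof
        assume "D \<le> enat k"
        hence "(LEAST t. P t) \<le> k" using Deq by simp
        moreover have "P (LEAST t. P t)" using LeastI_ex[OF ex] .
        ultimately show "reach k i" unfolding reach_def P_def by blast
      next
        assume "reach k i"
        then obtain t where "P t" "t \<le> k" using nx unfolding reach_def P_def by blast
        hence "(LEAST t. P t) \<le> k" using Least_le[of P t] by simp
        thus "D \<le> enat k" using Deq by simp
      qed
    next
      case False
      hence "D = \<infinity>" using nx unfolding D_def inf_dist_def V_def by auto
      thus ?thesis using False nx unfolding reach_def by (simp; blast)
    qed
  qed
  have xiff: "x k i > 0 \<longleftrightarrow> D \<le> enat k" for k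
    using Dreach lower[OF iV] upper[OF iV] by blast
  have x0iff: "x k i = 0 \<longleftrightarrow> \<not> D \<le> enat k" for k
    using xiff[of k] inv[of k] iV by force
  have rzero: "enat k \<le> D \<longrightarrow> r k i = 0" for k
  proof (induction k)
    case 0 thus ?case using init i_in by simp
  next
    case (Suc k)
    show ?case
    proof
      assume "enat (Suc k) \<le> D"
      hence "enat k < D" by (metis Suc_ile_eq)
      hence "x k i = 0" "enat k \<le> D" using x0iff[of k] by auto
      thus "r (Suc k) i = 0" using Suc.IH r_step[OF i_in] by simp
    qed
  qed
  have rpos: "D < enat k \<longrightarrow> r k i > 0" for k
  proof (induction k)
    case 0 thus ?case by (simp add: zero_enat_def[symmetric])
  next
    case (Suc k)
    show ?case
    proof
      assume "D < enat (Suc k)"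
      hence "D \<le> enat k" by (metis Suc_ile_eq enat_ord_simps(2) not_le)
      hence "x k i > 0" using xiff by simp
      moreover have "r k i \<ge> 0" using inv[of k] iV by auto
      moreover have "h * \<delta> * x k i > 0" using \<open>x k i > 0\<close> h_pos delta_pos by simp
      ultimately show "r (Suc k) i > 0" using r_step[OF i_in, of k] by linarith
    qed
  qed
  have rlt: "r k i < 1" for k using inv[of k] iV by force
  show ?thesis
    unfolding D_def[symmetric]
  proof (intro conjI)
    show "\<forall>k. 0 < s k i" using inv iV by auto
    show "D \<noteq> \<infinity> \<longrightarrow> (\<forall>k. (enat k < D \<longrightarrow> x k i = 0) \<and> (D \<le> enat k \<longrightarrow> 0 < x k i \<and> x k i < 1))"
      using x0iff xiff xlt1[OF iV] by (auto simp: not_le)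
    show "D \<noteq> \<infinity> \<longrightarrow> (\<forall>k. (enat k \<le> D \<longrightarrow> r k i = 0) \<and> (D < enat k \<longrightarrow> 0 < r k i \<and> r k i < 1))"
      using rzero rpos rlt by auto
    show "x 0 i = 0 \<and> D = \<infinity> \<longrightarrow> (\<forall>k. x k i = 0 \<and> r k i = 0)"
      using x0iff rzero by auto
  qed
qed

end
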